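(* Let $K\ge 2$, let $\mathcal V=\{\mathbf v\in\{0,1\}^K:\sum_i \mathbf v_i=1\}$ be the set of one-hot vectors, let $\boldsymbol\pi$ be a probability vector on $K$ categories, and let $(\alpha_t)_{t\in[0,1]}$ be a noise schedule with values in $[0,1]$, monotonically decreasing in $t$, with $\alpha_1=0$ and $\alpha_t>0$ for $t<1$. Fix $\mathbf x\in\mathcal V$ and define the forward marginals $q_t(\cdot\mid \mathbf x)=\mathrm{Cat}(\cdot;\alpha_t\mathbf x+(1-\alpha_t)\boldsymbol\pi)$. For $0\le s<t\le 1$ let $q_{s|t}(\cdot\mid \mathbf z_t,\mathbf x)$ denote the true reverse posterior of the Markovian forward process, i.e. $q_{s|t}(\mathbf z_s\mid\mathbf z_t,\mathbf x)=q_{t|s}(\mathbf z_t\mid\mathbf z_s)\,q_s(\mathbf z_s\mid\mathbf x)/q_t(\mathbf z_t\mid\mathbf x)$ with forward transition $q_{t|s}(\cdot\mid\mathbf z_s)=\mathrm{Cat}(\cdot;\tfrac{\alpha_t}{\alpha_s}\mathbf z_s+(1-\tfrac{\alpha_t}{\alpha_s})\boldsymbol\pi)$. Let $T\ge1$, $t(i)=i/T$ for $0\le i\le T$, and let $(\kappa_t)$ be numbers in $[0,1]$. Define the $\Psi$-posteriors $$\Psi_{s|t}(\cdot\mid\mathbf x,\mathbf z_t)=\kappa_t\,q_{s|t}(\cdot\mid\mathbf z_t,\mathbf x)+(1-\kappa_t)\,q_s(\cdot\mid\mathbf x)$$ for $(s,t)=(t(i-1),t(i))$, $\Psi_1(\cdot\mid\mathbf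 x)=\mathrm{Cat}(\cdot;\boldsymbol\pi)$, and define the marginals recursively by $\Psi_{t(i-1)}(\mathbf z_s\mid\mathbf x)=\sum_{\tilde{\mathbf z}_t\in\mathcal V}\Psi_{t(i)}(\tilde{\mathbf z}_t\mid\mathbf x)\,\Psi_{t(i-1)|t(i)}(\mathbf z_s\mid\tilde{\mathbf z}_t,\mathbf x)$. Then for every $0\le i\le T$, $\Psi_{t(i)}(\cdot\mid\mathbf x)=q_{t(i)}(\cdot\mid\mathbf x)$.
   Context: $\mathrm{Cat}(\cdot;\mathbf v)$ is the categorical distribution on $\mathcal V$ assigning probability $\mathbf v_i$ to the $i$-th one-hot vector. The construction is applied independently to each token of a sequence; the statement concerns a single token. *)

theory Defs
  imports Complex_Main
begin

text \<open>Vectors in R^K are modelled as functions nat => real, with components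
  indexed by 0..<K (components at indices >= K are required to vanish for
  one-hot vectors).\<close>

definition onehot :: "nat \<Rightarrow> (nat \<Rightarrow> real) set" where
  "onehot K = {v. (\<forall>i. v i \<in> {0, 1}) \<and> (\<forall>i\<ge>K. v i = 0) \<and> (\<Sum>i<K. v i) = 1}"

text \<open>Cat(z; p): probability that the categorical distribution with
  parameter vector p assigns to the one-hot vector z, i.e. p_i where z = e_i.\<close>
definition Cat :: "nat \<Rightarrow> (nat \<Rightarrow> real) \<Rightarrow> (nat \<Rightarrow> real) \<Rightarrow> real" where
  "Cat K z p = (\<Sum>i<K. z i * p i)"

definition qmarg :: "nat \<Rightarrow> (nat \<Rightarrow> real) \<Rightarrow> (real \<Rightarrow> real) \<Rightarrow> real
    \<Rightarrow> (nat \<Rightarrow> real) \<Rightarrow> (nat \<Rightarrow> real) \<Rightarrow> real" where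
  "qmarg K \<pi> \<alpha> t x z = Cat K z (\<lambda>i. \<alpha> t * x i + (1 - \<alpha> t) * \<pi> i)"

definition qtrans :: "nat \<Rightarrow> (nat \<Rightarrow> real) \<Rightarrow> (real \<Rightarrow> real) \<Rightarrow> real \<Rightarrow> real
    \<Rightarrow> (nat \<Rightarrow> real) \<Rightarrow> (nat \<Rightarrow> real) \<Rightarrow> real" where
  "qtrans K \<pi> \<alpha> s t zs zt =
     Cat K zt (\<lambda>i. (\<alpha> t / \<alpha> s) * zs i + (1 - \<alpha> t / \<alpha> s) * \<pi> i)"

definition qpost :: "nat \<Rightarrow> (nat \<Rightarrow> real) \<Rightarrow> (real \<Rightarrow> real) \<Rightarrow> real \<Rightarrow> real
    \<Rightarrow> (nat \<Rightarrow> real) \<Rightarrow> (nat \<Rightarrow> real) \<Rightarrow> (nat \<Rightarrow> real) \<Rightarrow> real" where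
  "qpost K \<pi> \<alpha> s t zs zt x =
     qtrans K \<pi> \<alpha> s t zs zt * qmarg K \<pi> \<alpha> s x zs / qmarg K \<pi> \<alpha> t x zt"

definition PsiPost :: "nat \<Rightarrow> (nat \<Rightarrow> real) \<Rightarrow> (real \<Rightarrow> real) \<Rightarrow> (real \<Rightarrow> real)
    \<Rightarrow> real \<Rightarrow> real \<Rightarrow> (nat \<Rightarrow> real) \<Rightarrow> (nat \<Rightarrow> real) \<Rightarrow> (nat \<Rightarrow> real) \<Rightarrow> real" where
  "PsiPost K \<pi> \<alpha> \<kappa> s t x zt zs =
     \<kappa> t * qpost K \<pi> \<alpha> s t zs zt x + (1 - \<kappa> t) * qmarg K \<pi> \<alpha> s x zs"

definition tgrid :: "nat \<Rightarrow> nat \<Rightarrow> real" where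
  "tgrid T i = real i / real T"

text \<open>PsiBack ... n z is the marginal Psi_{t(T-n)}(z | x), computed by the
  backward recursion starting from Psi_{t(T)} = Psi_1 = Cat(.; pi).\<close>
fun PsiBack :: "nat \<Rightarrow> (nat \<Rightarrow> real) \<Rightarrow> (real \<Rightarrow> real) \<Rightarrow> (real \<Rightarrow> real) \<Rightarrow> nat
    \<Rightarrow> (nat \<Rightarrow> real) \<Rightarrow> nat \<Rightarrow> (nat \<Rightarrow> real) \<Rightarrow> real" where
  "PsiBack K \<pi> \<alpha> \<kappa> T x 0 z = Cat K z \<pi>"
| "PsiBack K \<pi> \<alpha> \<kappa> T x (Suc n) z =
     (\<Sum>zt\<in>onehot K. PsiBack K \<pi> \<alpha> \<kappa> T x n zt *
        PsiPost K \<pi> \<alpha> \<kappa> (tgrid T (T - Suc n)) (tgrid T (T - n)) x zt z)"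

definition PsiMarg :: "nat \<Rightarrow> (nat \<Rightarrow> real) \<Rightarrow> (real \<Rightarrow> real) \<Rightarrow> (real \<Rightarrow> real) \<Rightarrow> nat
    \<Rightarrow> (nat \<Rightarrow> real) \<Rightarrow> nat \<Rightarrow> (nat \<Rightarrow> real) \<Rightarrow> real" where
  "PsiMarg K \<pi> \<alpha> \<kappa> T x i z = PsiBack K \<pi> \<alpha> \<kappa> T x (T - i) z"

end

theory Submission imports Defs begin

definition ev :: "nat \<Rightarrow> nat \<Rightarrow> real" where "ev j = (\<lambda>i. if i = j then 1 else 0)"

lemma Cat_ev: 
  assumes j: "j < K" shows "Cat K (ev j) p = p j"
proof -
  have "Cat K (ev j) p = (\<Sum>i<K. if i = j then p i else 0)"
    unfolding Cat_def ev_def by (rule sum.cong) auto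
  then show ?thesis using j by simp
qed

lemma onehot_eq: "onehot K = ev ` {..<K}"
proof
  show "ev ` {..<K} \<subseteq> onehot K"
  proof
    fix v assume "v \<in> ev ` {..<K}"
    then obtain j where j: "j < K" "v = ev j" by blast
    have "(\<Sum>i<K. v i) = (\<Sum>i<K. if i = j then 1 else 0)" unfolding j(2) ev_def by simp
    also have "\<dots> = 1" using j(1) by simp
    finally show "v \<in> onehot K" using j unfolding onehot_def ev_def by auto
  qed
next
  show "onehot K \<subseteq> ev ` {..<K}"
  proof
    fix v assume v: "v \<in> onehot K"
    have v01: "\<And>i. v i = 0 \<or> v i = 1" and vK: "\<And>i. i \<ge> K \<Longrightarrow> v i = 0"
      and vs: "(\<Sum>i<K. v i) = 1" using v unfolding onehot_def by auto
    have "\<exists>j<K. v j \<noteq> 0"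
    proof (rule ccontr)
      assume "\<not> ?thesis"
      then have "(\<Sum>i<K. v i) = 0" by simp
      with vs show False by simp
    qed
    then obtain j where j: "j < K" "v j = 1" using v01 by blast
    have "v i = 0" if "i \<noteq> j" for i
    proof (rule ccontr)
      assume ne: "v i \<noteq> 0"
      then have i1: "v i = 1" using v01 by blast
      have iK: "i < K" using vK i1 by (metis leI one_neq_zero)
      have nn: "\<forall>k\<in>{..<K}. 0 \<le> v k" using v01 by (metis order_refl zero_le_one)
      have "(\<Sum>k\<in>{i,j}. v k) \<le> (\<Sum>k<K. v k)"
        by (rule sum_mono2) (use iK j nn in auto)
      then show False using vs i1 j that by simp
    qed
    then have "v = ev j" using j by (auto simp: ev_def)
    then show "v \<in> ev ` {..<K}" using j by blast
  qed
qed

lemma inj_ev: "inj ev"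
proof (rule injI)
  fix a b assume "ev a = ev b"
  then have "ev a a = ev b a" by simp
  then show "a = b" by (simp add: ev_def split: if_splits)
qed

lemma sum_onehot: "(\<Sum>z\<in>onehot K. f z) = (\<Sum>j<K. f (ev j))"
  unfolding onehot_eq by (subst sum.reindex) (auto intro: inj_on_subset[OF inj_ev])

lemma sum_ev: "l < K \<Longrightarrow> (\<Sum>j<K. ev l j) = 1"
  unfolding ev_def by (simp add: sum.delta')
lemma key_term:
  fixes a_s a_t r pj pl xj xl \<kappa>0 :: real
  assumes "0 < a_s" "a_s \<le> 1" "0 \<le> a_t" "a_t \<le> a_s" "0 \<le> pj" "0 \<le> pl"
    and "xj \<in> {0,1}" "xl \<in> {0,1}" "j = l \<Longrightarrow> xj = xl \<and> pj = pl"
    and "Q = a_t / a_s * ev l j + (1 - a_t / a_s) * pj"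
  shows "(a_t * xj + (1 - a_t) * pj) * (Q * (a_s * xl + (1 - a_s) * pl) / (a_t * xj + (1 - a_t) * pj))
     = Q * (a_s * xl + (1 - a_s) * pl)"
proof (cases "a_t * xj + (1 - a_t) * pj = 0")
  case False then show ?thesis by simp
next
  case True
  have Z: "Q * (a_s * xl + (1 - a_s) * pl) = 0"
  proof (cases "a_t < 1")
    case lt: True
    have a: "a_t * xj \<ge> 0" using assms by auto
    have b: "(1 - a_t) * pj \<ge> 0" using assms lt by auto
    have "(1 - a_t) * pj = 0" using True a b by linarith
    then have pj0: "pj = 0" using lt by simp
    have atx: "a_t * xj = 0" using True a b by linarith
    show ?thesis
    proof (cases "j = l")
      case False then show ?thesis using assms pj0 by (simp add: ev_def)
    next
      case jl: True
      show ?thesis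
      proof (cases "a_t = 0")
        case True then show ?thesis using assms pj0 by simp
      next
        case False then have "xj = 0" using atx by simp
        then show ?thesis using assms jl pj0 by simp
      qed
    qed
  next
    case False
    then have 1: "a_t = 1" "a_s = 1" using assms by auto
    then have "xj = 0" using True by simp
    then show ?thesis using 1 assms by (cases "j = l") (simp_all add: ev_def)
  qed
  show ?thesis using True Z by simp
qed


lemma step_sum:
  fixes K :: nat and \<pi> x :: "nat \<Rightarrow> real" and \<alpha> \<kappa> :: "real \<Rightarrow> real" and s t :: real
  assumes pi_nonneg: "\<forall>i<K. \<pi> i \<ge> 0"
    and pi_sum: "(\<Sum>i<K. \<pi> i) = 1"
    and has: "0 < \<alpha> s" "\<alpha> s \<le> 1" and hat: "0 \<le> \<alpha> t" "\<alpha> t \<le> \<alpha> s"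
    and x_onehot: "x \<in> onehot K" and l: "l < K"
  shows "(\<Sum>j<K. qmarg K \<pi> \<alpha> t x (ev j) * PsiPost K \<pi> \<alpha> \<kappa> s t x (ev j) (ev l))
         = qmarg K \<pi> \<alpha> s x (ev l)"
proof -
  define r where "r = \<alpha> t / \<alpha> s"
  define ps where "ps = \<alpha> s * x l + (1 - \<alpha> s) * \<pi> l"
  define Q where "Q j = r * ev l j + (1 - r) * \<pi> j" for j
  define pt where "pt j = \<alpha> t * x j + (1 - \<alpha> t) * \<pi> j" for j
  have x01: "\<And>i. x i \<in> {0,1}" and xs: "(\<Sum>i<K. x i) = 1" using x_onehot unfolding onehot_def by auto
  have qs: "qmarg K \<pi> \<alpha> s x (ev l) = ps" unfolding qmarg_def ps_def using l by (simp add: Cat_ev)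
  have termj: "qmarg K \<pi> \<alpha> t x (ev j) * PsiPost K \<pi> \<alpha> \<kappa> s t x (ev j) (ev l)
      = \<kappa> t * (Q j * ps) + (1 - \<kappa> t) * ps * pt j" if j: "j < K" for j
  proof -
    have qt: "qmarg K \<pi> \<alpha> t x (ev j) = pt j" unfolding qmarg_def pt_def using j by (simp add: Cat_ev)
    have qtr: "qtrans K \<pi> \<alpha> s t (ev l) (ev j) = Q j" unfolding qtrans_def Q_def r_def using j by (simp add: Cat_ev)
    have kt: "pt j * (Q j * ps / pt j) = Q j * ps"
      unfolding pt_def ps_def
      by (rule key_term[OF has hat, where pj = "\<pi> j" and pl = "\<pi> l" and l = l and j = j])
         (use pi_nonneg j l x01 in \<open>auto simp: Q_def r_def\<close>)
    have "qmarg K \<pi> \<alpha> t x (ev j) * PsiPost K \<pi> \<alpha> \<kappa> s t x (ev j) (ev l)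
       = pt j * (\<kappa> t * (Q j * ps / pt j) + (1 - \<kappa> t) * ps)"
      unfolding PsiPost_def qpost_def qt qtr qs by simp
    also have "\<dots> = \<kappa> t * (pt j * (Q j * ps / pt j)) + (1 - \<kappa> t) * ps * pt j"
      by (simp add: algebra_simps)
    finally show ?thesis using kt by simp
  qed
  have sQ: "(\<Sum>j<K. Q j) = 1"
    unfolding Q_def by (simp add: sum.distrib sum_distrib_left[symmetric] sum_ev[OF l] pi_sum)
  have sP: "(\<Sum>j<K. pt j) = 1"
    unfolding pt_def by (simp add: sum.distrib sum_distrib_left[symmetric] xs pi_sum)
  have "(\<Sum>j<K. qmarg K \<pi> \<alpha> t x (ev j) * PsiPost K \<pi> \<alpha> \<kappa> s t x (ev j) (ev l))
      = (\<Sum>j<K. \<kappa> t * (Q j * ps) + (1 - \<kappa> t) * ps * pt j)"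
    by (rule sum.cong) (auto simp: termj)
  also have "\<dots> = \<kappa> t * ps * (\<Sum>j<K. Q j) + (1 - \<kappa> t) * ps * (\<Sum>j<K. pt j)"
    by (simp only: sum.distrib sum_distrib_left[symmetric] sum_distrib_right[symmetric] mult.assoc mult.commute[of _ ps]) (simp add: algebra_simps)
  also have "\<dots> = ps" using sQ sP by (simp add: algebra_simps)
  finally show ?thesis using qs by simp
qed

theorem mainTheorem1:
  fixes K T :: nat and \<pi> x :: "nat \<Rightarrow> real" and \<alpha> \<kappa> :: "real \<Rightarrow> real"
  assumes K2: "K \<ge> 2"
    and pi_nonneg: "\<forall>i<K. \<pi> i \<ge> 0"
    and pi_sum: "(\<Sum>i<K. \<pi> i) = 1"
    and alpha_range: "\<forall>t. 0 \<le> t \<and> t \<le> 1 \<longrightarrow> 0 \<le> \<alpha> t \<and> \<alpha> t \<le> 1"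
    and alpha_mono: "\<forall>s t. 0 \<le> s \<and> s \<le> t \<and> t \<le> 1 \<longrightarrow> \<alpha> t \<le> \<alpha> s"
    and alpha_1: "\<alpha> 1 = 0"
    and alpha_pos: "\<forall>t. 0 \<le> t \<and> t < 1 \<longrightarrow> \<alpha> t > 0"
    and T1: "T \<ge> 1"
    and kappa_range: "\<forall>i\<in>{1..T}. 0 \<le> \<kappa> (tgrid T i) \<and> \<kappa> (tgrid T i) \<le> 1"
    and x_onehot: "x \<in> onehot K"
  shows "\<forall>i\<le>T. \<forall>z\<in>onehot K.
           PsiMarg K \<pi> \<alpha> \<kappa> T x i z = qmarg K \<pi> \<alpha> (tgrid T i) x z"
proof -
  have gen: "\<forall>z\<in>onehot K. PsiBack K \<pi> \<alpha> \<kappa> T x n z = qmarg K \<pi> \<alpha> (tgrid T (T - n)) x z"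
    if "n \<le> T" for n
    using that
  proof (induction n)
    case 0
    have "tgrid T T = 1" unfolding tgrid_def using T1 by simp
    then show ?case by (simp add: qmarg_def alpha_1)
  next
    case (Suc n)
    define s where "s = tgrid T (T - Suc n)"
    define t where "t = tgrid T (T - n)"
    have Tpos: "real T > 0" using T1 by simp
    have s0: "0 \<le> s" unfolding s_def tgrid_def by simp
    have s1: "s < 1" unfolding s_def tgrid_def using Suc.prems Tpos by (simp add: divide_less_eq)
    have st: "s \<le> t" unfolding s_def t_def tgrid_def using Tpos by (simp add: divide_right_mono)
    have t1: "t \<le> 1" unfolding t_def tgrid_def using Tpos by (simp add: divide_le_eq)
    have has: "0 < \<alpha> s" "\<alpha> s \<le> 1" using alpha_pos alpha_range s0 s1 by auto
    have hat: "0 \<le> \<alpha> t" "\<alpha> t \<le> \<alpha> s" using alpha_range alpha_mono s0 st t1 by auto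
    have IH: "\<forall>z\<in>onehot K. PsiBack K \<pi> \<alpha> \<kappa> T x n z = qmarg K \<pi> \<alpha> t x z"
      using Suc by (simp add: t_def)
    show ?case
    proof
      fix z assume z: "z \<in> onehot K"
      then obtain l where l: "l < K" "z = ev l" unfolding onehot_eq by blast
      have "PsiBack K \<pi> \<alpha> \<kappa> T x (Suc n) z
          = (\<Sum>zt\<in>onehot K. qmarg K \<pi> \<alpha> t x zt * PsiPost K \<pi> \<alpha> \<kappa> s t x zt z)"
        by (simp add: s_def[symmetric] t_def[symmetric] IH)
      also have "\<dots> = (\<Sum>j<K. qmarg K \<pi> \<alpha> t x (ev j) * PsiPost K \<pi> \<alpha> \<kappa> s t x (ev j) (ev l))"
        by (simp add: sum_onehot l(2))
      also have "\<dots> = qmarg K \<pi> \<alpha> s x (ev l)"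
        by (rule step_sum[where \<alpha>=\<alpha> and s=s and t=t, OF pi_nonneg pi_sum has hat x_onehot l(1)])
      finally show "PsiBack K \<pi> \<alpha> \<kappa> T x (Suc n) z = qmarg K \<pi> \<alpha> (tgrid T (T - Suc n)) x z"
        using l by (simp add: s_def)
    qed
  qed
  show ?thesis
  proof (intro allI impI ballI)
    fix i z assume i: "i \<le> T" and z: "z \<in> onehot K"
    have "T - (T - i) = i" using i by simp
    then show "PsiMarg K \<pi> \<alpha> \<kappa> T x i z = qmarg K \<pi> \<alpha> (tgrid T i) x z"
      unfolding PsiMarg_def using gen[of "T - i"] z by simp
  qed
qed

end
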